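(* In the setting described in the context, the traces of the SLD quantum information matrices of the two schemes are $$\mathrm{tr}\{H^{(i)}_\theta\}=\frac4d\sum_{i=1}^{d-1}\sum_{j=1}^n\Bigl(\frac{\partial f_j(\theta_i)}{\partial\theta_i}\Bigr)^2,\qquad \mathrm{tr}\{H^{(ii)}_\theta\}=\frac4d\sum_{i=1}^{d-1}\Bigl(\sum_{j=1}^n\frac{\partial f_j(\theta_i)}{\partial\theta_i}\Bigr)^2.$$
   Context: Let $t_1,\dots,t_{d-1}$ be $d\times d$ matrices with $t_k=t_k^\dagger$, $\mathrm{tr}\{t_k\}=0$, $\mathrm{tr}\{t_kt_l\}=\delta_{kl}$ and $t_kt_l=t_lt_k$; let $\{|w_k\rangle\}_{k=1}^d$ be a common orthonormal eigenbasis and $|\psi_{sep}\rangle=\frac1{\sqrt d}\sum_{k=1}^d|w_k\rangle$. Let $f_1,\dots,f_n:\mathbb{R}\to\mathbb{R}$ be differentiable with $f_j'>0$ and $0\le\sum_jf_j(\theta_k)\le\pi$ for all $j,k$ and all $\theta$ in the parameter range. For $\theta=(\theta_1,\dots,\theta_{d-1})$ define $U^j_\theta=\exp\bigl(i\sum_{k=1}^{d-1}f_j(\theta_k)t_k\bigr)$, $j=1,\dots,n$. Scheme (i): each $U^j_\theta$ acts on its own copy of $|\psi_{sep}\rangle$, giving the product output state $\bigotimes_{j=1}^nU^j_\theta|\psi_{sep}\rangle$; scheme (ii): all channels act in sequence on one copy, giving $U^n_\theta\cdots U^1_\theta|\psi_{sep}\rangle$. $H^{(i)}_\theta$, $H^{(ii)}_\theta$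 denote the SLD quantum information matrices of the respective output families; for a pure family $|\psi_\theta\rangle$, $(H_\theta)_{mm'}=4\,\mathrm{Re}[\langle\partial_m\psi|\partial_{m'}\psi\rangle-\langle\partial_m\psi|\psi\rangle\langle\psi|\partial_{m'}\psi\rangle]$. *)

theory Defs
  imports "HOL-Analysis.Analysis"
begin

fun mpow :: "complex^'d^'d \<Rightarrow> nat \<Rightarrow> complex^'d^'d" where
  "mpow A 0 = mat 1"
| "mpow A (Suc k) = A ** mpow A k"

definition mexp :: "complex^'d^'d \<Rightarrow> complex^'d^'d" where
  "mexp A = (\<chi> a b. (\<Sum>k. (mpow A k) $ a $ b / of_nat (fact k)))"

definition mtrace :: "complex^'d^'d \<Rightarrow> complex" where
  "mtrace A = (\<Sum>a\<in>UNIV. A $ a $ a)"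

definition adjoint_mat :: "complex^'d^'d \<Rightarrow> complex^'d^'d" where
  "adjoint_mat A = (\<chi> a b. cnj (A $ b $ a))"

definition vinner :: "complex^'d \<Rightarrow> complex^'d \<Rightarrow> complex" where
  "vinner u v = (\<Sum>a\<in>UNIV. cnj (u $ a) * v $ a)"

text \<open>A state is a function from a finite index set I to complex amplitudes;
  a family is parametrised by \<theta> :: nat \<Rightarrow> real (components \<theta> 0, ..., \<theta> (p-1)).\<close>

definition sinner :: "'x set \<Rightarrow> ('x \<Rightarrow> complex) \<Rightarrow> ('x \<Rightarrow> complex) \<Rightarrow> complex" where
  "sinner I u v = (\<Sum>x\<in>I. cnj (u x) * v x)"

definition pd_state :: "((nat \<Rightarrow> real) \<Rightarrow> 'x \<Rightarrow> complex) \<Rightarrow> (nat \<Rightarrow> real) \<Rightarrow> nat \<Rightarrow> 'x \<Rightarrow> complex" where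
  "pd_state \<Psi> \<theta> m = (\<lambda>x. vector_derivative (\<lambda>s. \<Psi> (\<theta>(m := s)) x) (at (\<theta> m)))"

definition sld_qim :: "'x set \<Rightarrow> ((nat \<Rightarrow> real) \<Rightarrow> 'x \<Rightarrow> complex) \<Rightarrow> (nat \<Rightarrow> real) \<Rightarrow> nat \<Rightarrow> nat \<Rightarrow> real" where
  "sld_qim I \<Psi> \<theta> m m' =
     4 * Re (sinner I (pd_state \<Psi> \<theta> m) (pd_state \<Psi> \<theta> m')
             - sinner I (pd_state \<Psi> \<theta> m) (\<Psi> \<theta>) * sinner I (\<Psi> \<theta>) (pd_state \<Psi> \<theta> m'))"

definition sld_qim_trace :: "nat \<Rightarrow> 'x set \<Rightarrow> ((nat \<Rightarrow> real) \<Rightarrow> 'x \<Rightarrow> complex) \<Rightarrow> (nat \<Rightarrow> real) \<Rightarrow> real" where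
  "sld_qim_trace p I \<Psi> \<theta> = (\<Sum>m<p. sld_qim I \<Psi> \<theta> m m)"

definition chanU :: "(nat \<Rightarrow> complex^'d^'d) \<Rightarrow> (nat \<Rightarrow> real \<Rightarrow> real) \<Rightarrow> nat \<Rightarrow> (nat \<Rightarrow> real) \<Rightarrow> complex^'d^'d" where
  "chanU t f j \<theta> = mexp (\<chi> a b. \<i> * (\<Sum>k<CARD('d) - 1. complex_of_real (f j (\<theta> k)) * t k $ a $ b))"

definition psi_sep :: "('d \<Rightarrow> complex^'d) \<Rightarrow> complex^'d" where
  "psi_sep w = (\<Sum>a\<in>UNIV. complex_of_real (1 / sqrt (real CARD('d))) *s w a)"

text \<open>Scheme (i): tensor product of the n outputs; basis of the tensor product
  indexed by tuples g in the extensional function space from {..<n} to UNIV.\<close>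
definition prod_index :: "nat \<Rightarrow> (nat \<Rightarrow> 'd) set" where
  "prod_index n = ({..<n} \<rightarrow>\<^sub>E (UNIV :: 'd set))"

definition scheme_i :: "(nat \<Rightarrow> complex^'d^'d) \<Rightarrow> (nat \<Rightarrow> real \<Rightarrow> real) \<Rightarrow> nat \<Rightarrow> ('d \<Rightarrow> complex^'d)
    \<Rightarrow> (nat \<Rightarrow> real) \<Rightarrow> (nat \<Rightarrow> 'd) \<Rightarrow> complex" where
  "scheme_i t f n w \<theta> = (\<lambda>g. \<Prod>j<n. (chanU t f j \<theta> *v psi_sep w) $ g j)"

fun seq_state :: "(nat \<Rightarrow> complex^'d^'d) \<Rightarrow> (nat \<Rightarrow> real \<Rightarrow> real) \<Rightarrow> nat \<Rightarrow> ('d \<Rightarrow> complex^'d)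
    \<Rightarrow> (nat \<Rightarrow> real) \<Rightarrow> complex^'d" where
  "seq_state t f 0 w \<theta> = psi_sep w"
| "seq_state t f (Suc j) w \<theta> = chanU t f j \<theta> *v seq_state t f j w \<theta>"

definition scheme_ii :: "(nat \<Rightarrow> complex^'d^'d) \<Rightarrow> (nat \<Rightarrow> real \<Rightarrow> real) \<Rightarrow> nat \<Rightarrow> ('d \<Rightarrow> complex^'d)
    \<Rightarrow> (nat \<Rightarrow> real) \<Rightarrow> 'd \<Rightarrow> complex" where
  "scheme_ii t f n w \<theta> = (\<lambda>a. seq_state t f n w \<theta> $ a)"

end

theory Submission
  imports Defs
begin


lemma mat_vec_scale: "(A::complex^'d^'d) *v (c *s v) = c *s (A *v v)"
  by (simp add: vec_eq_iff matrix_vector_mult_def sum_distrib_left algebra_simps)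

lemma mpow_eig:
  assumes "(A::complex^'d^'d) *v v = c *s v"
  shows "mpow A k *v v = (c ^ k) *s v"
proof (induction k)
  case 0 then show ?case by simp
next
  case (Suc k)
  have "mpow A (Suc k) *v v = A *v (mpow A k *v v)" by (simp add: matrix_vector_mul_assoc)
  also have "\<dots> = (c^Suc k) *s v" using Suc assms by (simp add: mat_vec_scale)
  finally show ?case .
qed

lemma mpow_bound:
  fixes A :: "complex^'d^'d"
  defines "N \<equiv> (\<Sum>a\<in>UNIV. \<Sum>b\<in>UNIV. norm (A $ a $ b))"
  shows "norm (mpow A k $ a $ b) \<le> N ^ k"
proof (induction k arbitrary: a b)
  case 0 then show ?case by (simp add: mat_def)
next
  case (Suc k)
  have N0: "0 \<le> N" unfolding N_def by (intro sum_nonneg) auto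
  have "norm (mpow A (Suc k) $ a $ b) = norm (\<Sum>c\<in>UNIV. A $ a $ c * mpow A k $ c $ b)"
    by (simp add: matrix_matrix_mult_def)
  also have "\<dots> \<le> (\<Sum>c\<in>UNIV. norm (A $ a $ c) * N ^ k)"
    by (rule order_trans[OF norm_sum sum_mono]) (auto simp: norm_mult intro: mult_left_mono Suc)
  also have "\<dots> = (\<Sum>c\<in>UNIV. norm (A $ a $ c)) * N ^ k" by (simp add: sum_distrib_right)
  also have "\<dots> \<le> N * N ^ k"
  proof (rule mult_right_mono)
    show "(\<Sum>c\<in>UNIV. norm (A $ a $ c)) \<le> N"
      unfolding N_def by (rule member_le_sum) (auto intro: sum_nonneg)
  qed (use N0 in auto)
  finally show ?case by simp
qed

lemma mpow_summable:
  fixes A :: "complex^'d^'d"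
  shows "summable (\<lambda>k. mpow A k $ a $ b / of_nat (fact k))"
proof -
  define N where "N \<equiv> (\<Sum>a\<in>UNIV. \<Sum>b\<in>UNIV. norm (A $ a $ b))"
  show ?thesis
  proof (rule summable_comparison_test[OF _ summable_exp[of N]])
    show "\<exists>M. \<forall>k\<ge>M. norm (mpow A k $ a $ b / of_nat (fact k)) \<le> inverse (fact k) * N ^ k"
      using mpow_bound[of A k a b for k]
      by (auto simp: N_def norm_divide divide_simps mult.commute)
  qed
qed

lemma mexp_eig:
  assumes "(A::complex^'d^'d) *v v = c *s v"
  shows "mexp A *v v = exp c *s v"
proof -
  have "(mexp A *v v) $ a = exp c * v $ a" for a
  proof -
    have "(mexp A *v v) $ a = (\<Sum>b\<in>UNIV. (\<Sum>k. mpow A k $ a $ b / of_nat (fact k)) * v $ b)"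
      by (simp add: mexp_def matrix_vector_mult_def)
    also have "\<dots> = (\<Sum>b\<in>UNIV. \<Sum>k. mpow A k $ a $ b / of_nat (fact k) * v $ b)"
      by (intro sum.cong refl) (rule suminf_mult2[OF mpow_summable])
    also have "\<dots> = (\<Sum>k. \<Sum>b\<in>UNIV. mpow A k $ a $ b / of_nat (fact k) * v $ b)"
      by (rule suminf_sum[symmetric]) (intro summable_mult2 mpow_summable)
    also have "\<dots> = (\<Sum>k. (mpow A k *v v) $ a / of_nat (fact k))"
      by (simp add: matrix_vector_mult_def sum_divide_distrib)
    also have "\<dots> = (\<Sum>k. c ^ k / of_nat (fact k) * v $ a)"
      by (simp add: mpow_eig[OF assms])
    also have "\<dots> = (\<Sum>k. c ^ k / of_nat (fact k)) * v $ a"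
    proof (rule suminf_mult2[symmetric])
      show "summable (\<lambda>k. c ^ k / of_nat (fact k))"
        using exp_converges[of c] by (simp add: sums_iff scaleR_conv_of_real divide_inverse mult.commute)
    qed
    also have "(\<Sum>k. c ^ k / of_nat (fact k)) = exp c"
      using exp_converges[of c] by (simp add: sums_iff scaleR_conv_of_real divide_inverse mult.commute)
    finally show ?thesis .
  qed
  then show ?thesis by (simp add: vec_eq_iff)
qed




lemma matvec_sum:
  "(M::complex^'d^'d) *v (\<Sum>a\<in>S. c a *s w a) = (\<Sum>a\<in>S. c a *s (M *v w a))"
  by (simp add: vec_eq_iff matrix_vector_mult_def sum_component sum_distrib_left
      algebra_simps sum.swap[of _ UNIV S])

lemma vinner_expand:
  fixes w :: "'d \<Rightarrow> complex^'d"
  assumes onb: "\<And>a b. vinner (w a) (w b) = (if a = b then 1 else 0)"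
  shows "vinner (\<Sum>a\<in>UNIV. c a *s w a) (\<Sum>a\<in>UNIV. e a *s w a) = (\<Sum>a\<in>UNIV. cnj (c a) * e a)"
proof -
  have "vinner (\<Sum>a\<in>UNIV. c a *s w a) (\<Sum>a\<in>UNIV. e a *s w a)
      = (\<Sum>x\<in>UNIV. (\<Sum>a\<in>UNIV. cnj (c a) * cnj (w a $ x)) * (\<Sum>b\<in>UNIV. e b * w b $ x))"
    by (simp add: vinner_def sum_component)
  also have "\<dots> = (\<Sum>x\<in>UNIV. \<Sum>a\<in>UNIV. \<Sum>b\<in>UNIV. cnj (c a) * e b * (cnj (w a $ x) * w b $ x))"
    by (simp only: sum_product) (simp add: mult_ac)
  also have "\<dots> = (\<Sum>a\<in>UNIV. \<Sum>x\<in>UNIV. \<Sum>b\<in>UNIV. cnj (c a) * e b * (cnj (w a $ x) * w b $ x))"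
    by (rule sum.swap)
  also have "\<dots> = (\<Sum>a\<in>UNIV. \<Sum>b\<in>UNIV. \<Sum>x\<in>UNIV. cnj (c a) * e b * (cnj (w a $ x) * w b $ x))"
    by (rule sum.cong[OF refl], rule sum.swap)
  also have "\<dots> = (\<Sum>a\<in>UNIV. \<Sum>b\<in>UNIV. cnj (c a) * e b * (if a = b then 1 else 0))"
    by (intro sum.cong refl, simp only: sum_distrib_left[symmetric], subst onb[unfolded vinner_def], rule refl)
  also have "\<dots> = (\<Sum>a\<in>UNIV. cnj (c a) * e a)"
    by (simp add: if_distrib cong: if_cong)
  finally show ?thesis .
qed

lemma trace_basis:
  fixes w :: "'d \<Rightarrow> complex^'d" and A :: "complex^'d^'d"
  assumes onb: "\<And>a b. vinner (w a) (w b) = (if a = b then 1 else 0)"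
  shows "mtrace A = (\<Sum>a\<in>UNIV. vinner (w a) (A *v w a))"
proof -
  define W :: "complex^'d^'d" where "W = (\<chi> i a. w a $ i)"
  have "adjoint_mat W ** W = mat 1"
    using onb by (simp add: vec_eq_iff matrix_matrix_mult_def adjoint_mat_def W_def vinner_def mat_def)
  then have "W ** adjoint_mat W = mat 1" by (simp add: matrix_left_right_inverse)
  then have comp: "(\<Sum>a\<in>UNIV. w a $ j * cnj (w a $ i)) = (if j = i then 1 else 0)" for i j
    by (auto simp: vec_eq_iff matrix_matrix_mult_def adjoint_mat_def W_def mat_def)
  have "(\<Sum>a\<in>UNIV. vinner (w a) (A *v w a))
      = (\<Sum>a\<in>UNIV. \<Sum>i\<in>UNIV. \<Sum>j\<in>UNIV. A $ i $ j * (w a $ j * cnj (w a $ i)))"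
    by (simp add: vinner_def matrix_vector_mult_def sum_distrib_left mult_ac)
  also have "\<dots> = (\<Sum>i\<in>UNIV. \<Sum>a\<in>UNIV. \<Sum>j\<in>UNIV. A $ i $ j * (w a $ j * cnj (w a $ i)))"
    by (rule sum.swap)
  also have "\<dots> = (\<Sum>i\<in>UNIV. \<Sum>j\<in>UNIV. \<Sum>a\<in>UNIV. A $ i $ j * (w a $ j * cnj (w a $ i)))"
    by (rule sum.cong[OF refl], rule sum.swap)
  also have "\<dots> = (\<Sum>i\<in>UNIV. \<Sum>j\<in>UNIV. A $ i $ j * (if j = i then 1 else 0))"
    by (intro sum.cong refl, simp only: sum_distrib_left[symmetric] comp)
  also have "\<dots> = (\<Sum>i\<in>UNIV. A $ i $ i)"
    by (simp add: if_distrib cong: if_cong)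
  finally show ?thesis by (simp add: mtrace_def)
qed

lemma herm_real:
  assumes "adjoint_mat (T::complex^'d^'d) = T"
  shows "cnj (vinner u (T *v u)) = vinner u (T *v u)"
proof -
  have h: "cnj (T $ i $ j) = T $ j $ i" for i j
    using assms by (metis adjoint_mat_def vec_lambda_beta)
  have "cnj (vinner u (T *v u)) = (\<Sum>i\<in>UNIV. \<Sum>j\<in>UNIV. u $ i * T $ j $ i * cnj (u $ j))"
    by (simp add: vinner_def matrix_vector_mult_def sum_distrib_left h mult_ac)
  also have "\<dots> = (\<Sum>j\<in>UNIV. \<Sum>i\<in>UNIV. u $ i * T $ j $ i * cnj (u $ j))"
    by (rule sum.swap)
  also have "\<dots> = vinner u (T *v u)"
    by (simp add: vinner_def matrix_vector_mult_def sum_distrib_left mult_ac)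
  finally show ?thesis .
qed



lemma vinner_scale_right: "vinner u (c *s v) = c * vinner u v"
  by (simp add: vinner_def sum_distrib_left mult_ac)

locale setting =
  fixes t :: "nat \<Rightarrow> complex^'d^'d" and w :: "'d \<Rightarrow> complex^'d"
  assumes herm: "\<And>k. k < CARD('d) - 1 \<Longrightarrow> adjoint_mat (t k) = t k"
    and traceless: "\<And>k. k < CARD('d) - 1 \<Longrightarrow> mtrace (t k) = 0"
    and orth: "\<And>k l. k < CARD('d) - 1 \<Longrightarrow> l < CARD('d) - 1 \<Longrightarrow>
                 mtrace (t k ** t l) = (if k = l then 1 else 0)"
    and onb: "\<And>a b. vinner (w a) (w b) = (if a = b then 1 else 0)"
    and eig: "\<And>k a. k < CARD('d) - 1 \<Longrightarrow> \<exists>c. t k *v w a = c *s w a"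
begin

definition lam where "lam k a = (SOME c. t k *v w a = c *s w a)"

lemma lam: "k < CARD('d) - 1 \<Longrightarrow> t k *v w a = lam k a *s w a"
  unfolding lam_def using eig[of k a] by (rule someI_ex)

lemma lam_inner: "k < CARD('d) - 1 \<Longrightarrow> vinner (w a) (t k *v w a) = lam k a"
  using lam[of k a] onb[of a a] by (simp add: vinner_scale_right)

definition L where "L k a = Re (lam k a)"

lemma lam_real: "k < CARD('d) - 1 \<Longrightarrow> lam k a = of_real (L k a)"
proof -
  assume k: "k < CARD('d) - 1"
  have "cnj (lam k a) = lam k a"
    using herm_real[OF herm[OF k], of "w a"] lam_inner[OF k] by simp
  then show ?thesis by (simp add: L_def complex_eq_iff)
qed

lemma L_sum: "k < CARD('d) - 1 \<Longrightarrow> (\<Sum>a\<in>UNIV. L k a) = 0"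
proof -
  assume k: "k < CARD('d) - 1"
  have "0 = mtrace (t k)" using traceless[OF k] by simp
  also have "\<dots> = (\<Sum>a\<in>UNIV. of_real (L k a))"
    using trace_basis[OF onb, of "t k"] lam_inner[OF k] lam_real[OF k] by simp
  finally show ?thesis by (metis of_real_eq_0_iff of_real_sum)
qed

lemma L_sq: "k < CARD('d) - 1 \<Longrightarrow> (\<Sum>a\<in>UNIV. (L k a)^2) = 1"
proof -
  assume k: "k < CARD('d) - 1"
  have "1 = mtrace (t k ** t k)" using orth[OF k k] by simp
  also have "\<dots> = (\<Sum>a\<in>UNIV. vinner (w a) (t k *v (t k *v w a)))"
    using trace_basis[OF onb, of "t k ** t k"] by (simp add: matrix_vector_mul_assoc)
  also have "\<dots> = (\<Sum>a\<in>UNIV. of_real ((L k a)^2))"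
    using lam[OF k] lam_real[OF k] onb
    by (simp add: mat_vec_scale vinner_scale_right power2_eq_square)
  finally show ?thesis by (metis of_real_eq_1_iff of_real_sum)
qed

definition Phi :: "(real \<Rightarrow> real) \<Rightarrow> (nat \<Rightarrow> real) \<Rightarrow> 'd \<Rightarrow> real" where
  "Phi F \<theta> a = (\<Sum>k<CARD('d) - 1. F (\<theta> k) * L k a)"

lemma chan_eig: "chanU t f j \<theta> *v w a = exp (\<i> * of_real (Phi (f j) \<theta> a)) *s w a"
  unfolding chanU_def
proof (rule mexp_eig)
  show "(\<chi> a b. \<i> * (\<Sum>k<CARD('d) - 1. complex_of_real (f j (\<theta> k)) * t k $ a $ b)) *v w a
      = (\<i> * of_real (Phi (f j) \<theta> a)) *s w a"
  proof -
    have "((\<chi> a b. \<i> * (\<Sum>k<CARD('d) - 1. complex_of_real (f j (\<theta> k)) * t k $ a $ b)) *v w a) $ x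
        = \<i> * (\<Sum>k<CARD('d) - 1. complex_of_real (f j (\<theta> k)) * (t k *v w a) $ x)" for x
      by (simp add: matrix_vector_mult_def sum_distrib_left sum_distrib_right mult_ac sum.swap[of _ UNIV])
    also have "\<dots> x = \<i> * (\<Sum>k<CARD('d) - 1. complex_of_real (f j (\<theta> k)) * of_real (L k a) * w a $ x)" for x
      by (intro arg_cong[where f="(*) \<i>"] sum.cong refl) (simp add: lam lam_real)
    finally have e: "((\<chi> a b. \<i> * (\<Sum>k<CARD('d) - 1. complex_of_real (f j (\<theta> k)) * t k $ a $ b)) *v w a) $ x
        = \<i> * (\<Sum>k<CARD('d) - 1. complex_of_real (f j (\<theta> k)) * of_real (L k a) * w a $ x)" for x .
    show ?thesis
      unfolding vec_eq_iff e by (simp add: Phi_def sum_distrib_left sum_distrib_right mult_ac of_real_sum)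
  qed
qed

end



context setting begin

definition C :: "(real \<Rightarrow> real) \<Rightarrow> (nat \<Rightarrow> real) \<Rightarrow> 'd \<Rightarrow> complex" where
  "C F \<theta> a = of_real (1 / sqrt (real CARD('d))) * exp (\<i> * of_real (Phi F \<theta> a))"

definition vst :: "(real \<Rightarrow> real) \<Rightarrow> (nat \<Rightarrow> real) \<Rightarrow> complex^'d" where
  "vst F \<theta> = (\<Sum>a\<in>UNIV. C F \<theta> a *s w a)"

lemma chan_psi: "chanU t f j \<theta> *v psi_sep w = vst (f j) \<theta>"
  unfolding psi_sep_def vst_def matvec_sum mat_vec_scale chan_eig vector_smult_assoc C_def ..

lemma Phi_sum: "(\<Sum>j<n. Phi (f j) \<theta> a) = Phi (\<lambda>x. \<Sum>j<n. f j x) \<theta> a"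
  unfolding Phi_def by (simp add: sum_distrib_right sum.swap[of _ "{..<n}"])

lemma seq_vst: "seq_state t f n w \<theta> = vst (\<lambda>x. \<Sum>j<n. f j x) \<theta>"
proof (induction n)
  case 0
  then show ?case by (simp add: vst_def psi_sep_def C_def Phi_def)
next
  case (Suc n)
  have s1: "seq_state t f (Suc n) w \<theta> = chanU t f n \<theta> *v vst (\<lambda>x. \<Sum>j<n. f j x) \<theta>"
    using Suc by simp
  have key: "C (\<lambda>x. \<Sum>j<n. f j x) \<theta> a * exp (\<i> * complex_of_real (Phi (f n) \<theta> a)) =
        C (\<lambda>x. \<Sum>j<Suc n. f j x) \<theta> a" for a
  proof -
    have "Phi (\<lambda>x. \<Sum>j<Suc n. f j x) \<theta> a = Phi (\<lambda>x. \<Sum>j<n. f j x) \<theta> a + Phi (f n) \<theta> a"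
      by (simp add: Phi_def distrib_right sum.distrib)
    then show ?thesis
      by (simp add: C_def exp_add[symmetric] distrib_left mult_ac add_ac)
  qed
  have s2: "chanU t f n \<theta> *v vst (\<lambda>x. \<Sum>j<n. f j x) \<theta> = vst (\<lambda>x. \<Sum>j<Suc n. f j x) \<theta>"
    unfolding vst_def matvec_sum mat_vec_scale chan_eig vector_smult_assoc key ..
  show ?case using s1 s2 by simp
qed

lemma Phi_deriv:
  assumes m: "m < CARD('d) - 1" and F: "(F has_real_derivative D) (at (\<theta> m))"
  shows "((\<lambda>s. Phi F (\<theta>(m:=s)) a) has_real_derivative (D * L m a)) (at (\<theta> m))"
proof -
  have e: "Phi F (\<theta>(m:=s)) a = F s * L m a + (\<Sum>k\<in>{..<CARD('d) - 1} - {m}. F (\<theta> k) * L k a)" for s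
    unfolding Phi_def using m
    by (simp add: sum.remove[of _ m])
  show ?thesis unfolding e
    by (auto intro!: derivative_eq_intros F)
qed

lemma C_deriv:
  assumes m: "m < CARD('d) - 1" and F: "(F has_real_derivative D) (at (\<theta> m))"
  shows "((\<lambda>s. C F (\<theta>(m:=s)) a) has_vector_derivative (\<i> * of_real (D * L m a) * C F \<theta> a)) (at (\<theta> m))"
proof -
  have g: "((\<lambda>s. \<i> * of_real (Phi F (\<theta>(m:=s)) a)) has_vector_derivative (\<i> * of_real (D * L m a))) (at (\<theta> m))"
    by (intro has_vector_derivative_mult_right has_vector_derivative_of_real Phi_deriv[where \<theta>=\<theta> and m=m, OF m F])
  have "((exp \<circ> (\<lambda>s. \<i> * of_real (Phi F (\<theta>(m:=s)) a))) has_vector_derivative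
      (\<i> * of_real (D * L m a) * exp (\<i> * of_real (Phi F (\<theta>(m:=\<theta> m)) a)))) (at (\<theta> m))"
    by (rule field_vector_diff_chain_at[OF g DERIV_exp])
  then have "((\<lambda>s. exp (\<i> * of_real (Phi F (\<theta>(m:=s)) a))) has_vector_derivative
      (\<i> * of_real (D * L m a) * exp (\<i> * of_real (Phi F \<theta> a)))) (at (\<theta> m))"
    by (simp add: o_def)
  from has_vector_derivative_mult_right[OF this, of "of_real (1 / sqrt (real CARD('d)))"]
  show ?thesis by (simp add: C_def mult_ac)
qed

lemma vst_deriv:
  assumes m: "m < CARD('d) - 1" and F: "(F has_real_derivative D) (at (\<theta> m))"
  shows "((\<lambda>s. vst F (\<theta>(m:=s)) $ x) has_vector_derivative
     ((\<Sum>a\<in>UNIV. (\<i> * of_real (D * L m a) * C F \<theta> a) *s w a) $ x)) (at (\<theta> m))"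
  unfolding vst_def sum_component vector_smult_component
  by (intro has_vector_derivative_sum has_vector_derivative_mult_left C_deriv[where \<theta>=\<theta> and m=m, OF m F])

lemma C_norm: "cnj (C F \<theta> a) * C F \<theta> a = of_real (1 / real CARD('d))"
proof -
  have "cnj (C F \<theta> a) * C F \<theta> a = of_real ((norm (C F \<theta> a))^2)"
    by (metis complex_norm_square mult.commute)
  also have "norm (C F \<theta> a) = 1 / sqrt (real CARD('d))"
    by (simp add: C_def norm_mult norm_divide)
  finally show ?thesis by (simp add: power_divide)
qed

lemma C_norm_a: "cnj (C F \<theta> a) * (z * C F \<theta> a) = z * of_real (1 / real CARD('d))"
proof -
  have "cnj (C F \<theta> a) * (z * C F \<theta> a) = z * (cnj (C F \<theta> a) * C F \<theta> a)" by (simp only: mult_ac)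
  then show ?thesis by (simp only: C_norm)
qed

lemma C_norm_b: "cnj (z * C F \<theta> a) * C F \<theta> a = cnj z * of_real (1 / real CARD('d))"
proof -
  have "cnj (z * C F \<theta> a) * C F \<theta> a = cnj z * (cnj (C F \<theta> a) * C F \<theta> a)" by (simp only: complex_cnj_mult mult_ac)
  then show ?thesis by (simp only: C_norm)
qed

lemma C_norm_c: "cnj (z * C F \<theta> a) * (y * C F \<theta> a) = cnj z * y * of_real (1 / real CARD('d))"
proof -
  have "cnj (z * C F \<theta> a) * (y * C F \<theta> a) = cnj z * y * (cnj (C F \<theta> a) * C F \<theta> a)" by (simp only: complex_cnj_mult mult_ac)
  then show ?thesis by (simp only: C_norm)
qed

lemma cnj_i_real: "cnj (\<i> * of_real r) = - \<i> * of_real r"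
  by (simp add: complex_eq_iff)

lemma cnj_i_sq: "cnj (\<i> * of_real r) * (\<i> * of_real r) = of_real (r * r)"
  by (simp add: complex_eq_iff)

lemma inner_facts:
  fixes D :: real and F :: "real \<Rightarrow> real" and \<theta> :: "nat \<Rightarrow> real"
  assumes m: "m < CARD('d) - 1"
  defines "X \<equiv> (\<Sum>a\<in>UNIV. (\<i> * of_real (D * L m a) * C F \<theta> a) *s w a)"
  shows "vinner (vst F \<theta>) (vst F \<theta>) = 1"
    and "vinner X (vst F \<theta>) = 0"
    and "vinner (vst F \<theta>) X = 0"
    and "vinner X X = of_real (D^2 / real CARD('d))"
proof -
  have sL: "(\<Sum>a\<in>UNIV. D * L m a * (1 / real CARD('d))) = 0"
    using L_sum[OF m] by (simp add: sum_divide_distrib[symmetric] sum_distrib_left[symmetric])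
  have sL2: "(\<Sum>a\<in>UNIV. D * L m a * (D * L m a) * (1 / real CARD('d))) = D^2 / real CARD('d)"
  proof -
    have "(\<Sum>a\<in>UNIV. D * L m a * (D * L m a) * (1 / real CARD('d)))
        = D^2 / real CARD('d) * (\<Sum>a\<in>UNIV. (L m a)^2)"
      by (simp add: sum_distrib_left power2_eq_square mult_ac)
    then show ?thesis using L_sq[OF m] by simp
  qed
  show "vinner (vst F \<theta>) (vst F \<theta>) = 1"
    unfolding vst_def vinner_expand[OF onb] C_norm by simp
  have "vinner X (vst F \<theta>) = (\<Sum>a\<in>UNIV. cnj (\<i> * of_real (D * L m a)) * of_real (1 / real CARD('d)))"
    unfolding X_def vst_def vinner_expand[OF onb] C_norm_b ..
  also have "\<dots> = (\<Sum>a\<in>UNIV. - \<i> * of_real (D * L m a) * of_real (1 / real CARD('d)))"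
    by (simp only: cnj_i_real)
  also have "\<dots> = - \<i> * of_real (\<Sum>a\<in>UNIV. D * L m a * (1 / real CARD('d)))"
    by (simp add: sum_distrib_left of_real_sum mult_ac)
  also have "\<dots> = 0" unfolding sL by simp
  finally show "vinner X (vst F \<theta>) = 0" .
  have "vinner (vst F \<theta>) X = (\<Sum>a\<in>UNIV. (\<i> * of_real (D * L m a)) * of_real (1 / real CARD('d)))"
    unfolding X_def vst_def vinner_expand[OF onb] C_norm_a ..
  also have "\<dots> = \<i> * of_real (\<Sum>a\<in>UNIV. D * L m a * (1 / real CARD('d)))"
    by (simp add: sum_distrib_left of_real_sum mult_ac)
  also have "\<dots> = 0" unfolding sL by simp
  finally show "vinner (vst F \<theta>) X = 0" .
  have "vinner X X = (\<Sum>a\<in>UNIV. cnj (\<i> * of_real (D * L m a)) * (\<i> * of_real (D * L m a)) * of_real (1 / real CARD('d)))"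
    unfolding X_def vinner_expand[OF onb] C_norm_c ..
  also have "\<dots> = (\<Sum>a\<in>UNIV. of_real (D * L m a * (D * L m a) * (1 / real CARD('d))))"
    by (intro sum.cong refl) (subst cnj_i_sq, simp only: of_real_mult)
  also have "\<dots> = of_real (D^2 / real CARD('d))"
    by (simp only: of_real_sum[symmetric] sL2)
  finally show "vinner X X = of_real (D^2 / real CARD('d))" .
qed

end



lemma prod_inner:
  "(\<Sum>g\<in>prod_index n. \<Prod>l<n. cnj (A l $ g l) * B l $ g l) = (\<Prod>l<n. vinner (A l) (B l))"
  unfolding prod_index_def vinner_def by (rule prod_sum_PiE[symmetric]) auto

lemma prod_vec_deriv:
  fixes h :: "nat \<Rightarrow> real \<Rightarrow> complex"
  assumes "\<And>j. j \<in> I \<Longrightarrow> (h j has_vector_derivative h' j) (at x)"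
  shows "((\<lambda>s. \<Prod>j\<in>I. h j s) has_vector_derivative (\<Sum>j\<in>I. h' j * (\<Prod>l\<in>I - {j}. h l x))) (at x)"
  unfolding has_vector_derivative_def
  by (rule has_derivative_eq_rhs[OF has_derivative_prod])
    (use assms in \<open>auto simp: has_vector_derivative_def fun_eq_iff scaleR_sum_right scaleR_conv_of_real sum_distrib_left mult_ac\<close>)

lemma sinner_sums:
  fixes A B :: "nat \<Rightarrow> nat \<Rightarrow> complex^'d"
  shows "sinner (prod_index n) (\<lambda>g. \<Sum>j\<in>J. \<Prod>l<n. A j l $ g l) (\<lambda>g. \<Sum>j'\<in>J'. \<Prod>l<n. B j' l $ g l)
     = (\<Sum>j\<in>J. \<Sum>j'\<in>J'. \<Prod>l<n. vinner (A j l) (B j' l))"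
proof -
  have "sinner (prod_index n) (\<lambda>g. \<Sum>j\<in>J. \<Prod>l<n. A j l $ g l) (\<lambda>g. \<Sum>j'\<in>J'. \<Prod>l<n. B j' l $ g l)
      = (\<Sum>g\<in>prod_index n. \<Sum>j\<in>J. \<Sum>j'\<in>J'. \<Prod>l<n. cnj (A j l $ g l) * B j' l $ g l)"
    unfolding sinner_def cnj_sum cnj_prod sum_product prod.distrib ..
  also have "\<dots> = (\<Sum>j\<in>J. \<Sum>g\<in>prod_index n. \<Sum>j'\<in>J'. \<Prod>l<n. cnj (A j l $ g l) * B j' l $ g l)"
    by (rule sum.swap)
  also have "\<dots> = (\<Sum>j\<in>J. \<Sum>j'\<in>J'. \<Sum>g\<in>prod_index n. \<Prod>l<n. cnj (A j l $ g l) * B j' l $ g l)"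
    by (rule sum.cong[OF refl], rule sum.swap)
  also have "\<dots> = (\<Sum>j\<in>J. \<Sum>j'\<in>J'. \<Prod>l<n. vinner (A j l) (B j' l))"
    unfolding prod_inner ..
  finally show ?thesis .
qed

lemma scheme_i_inner:
  fixes U X :: "nat \<Rightarrow> complex^'d"
  assumes UU: "\<And>l. l < n \<Longrightarrow> vinner (U l) (U l) = 1"
    and XU: "\<And>l. l < n \<Longrightarrow> vinner (X l) (U l) = 0"
    and UX: "\<And>l. l < n \<Longrightarrow> vinner (U l) (X l) = 0"
  defines "Psi' \<equiv> (\<lambda>g. \<Sum>j<n. X j $ g j * (\<Prod>l\<in>{..<n} - {j}. U l $ g l))"
    and "Psi0 \<equiv> (\<lambda>g. \<Prod>l<n. U l $ g l)"
  shows "sinner (prod_index n) Psi' Psi' = (\<Sum>j<n. vinner (X j) (X j))"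
    and "sinner (prod_index n) Psi' Psi0 = 0"
    and "sinner (prod_index n) Psi0 Psi' = 0"
proof -
  define E where "E j l = (if l = j then X l else U l)" for j l
  have P: "X j $ g j * (\<Prod>l\<in>{..<n} - {j}. U l $ g l) = (\<Prod>l<n. E j l $ g l)" if j: "j < n" for j g
  proof -
    have "(\<Prod>l<n. E j l $ g l) = E j j $ g j * (\<Prod>l\<in>{..<n} - {j}. E j l $ g l)"
      using j by (simp add: prod.remove)
    also have "\<dots> = X j $ g j * (\<Prod>l\<in>{..<n} - {j}. U l $ g l)"
      by (auto simp: E_def intro!: prod.cong)
    finally show ?thesis by simp
  qed
  have Psi'_eq: "Psi' = (\<lambda>g. \<Sum>j<n. \<Prod>l<n. E j l $ g l)"
    unfolding Psi'_def using P by (auto intro!: sum.cong)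
  have Psi0_eq: "Psi0 = (\<lambda>g. \<Sum>j\<in>{0::nat}. \<Prod>l<n. (\<lambda>j. U) j l $ g l)"
    unfolding Psi0_def by simp
  have diag: "(\<Prod>l<n. vinner (E j l) (E j' l)) = (if j = j' then vinner (X j) (X j) else 0)"
    if "j < n" "j' < n" for j j'
  proof (cases "j = j'")
    case True
    have "(\<Prod>l<n. vinner (E j l) (E j' l)) = vinner (E j j) (E j j) * (\<Prod>l\<in>{..<n} - {j}. vinner (E j l) (E j l))"
      using that True by (simp add: prod.remove)
    also have "(\<Prod>l\<in>{..<n} - {j}. vinner (E j l) (E j l)) = 1"
      by (rule prod.neutral) (auto simp: E_def UU)
    finally show ?thesis using True by (simp add: E_def)
  next
    case False
    have "(\<Prod>l<n. vinner (E j l) (E j' l)) = 0"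
      by (rule prod_zero) (use that False in \<open>auto simp: E_def XU intro!: bexI[of _ j]\<close>)
    then show ?thesis using False by simp
  qed
  show "sinner (prod_index n) Psi' Psi' = (\<Sum>j<n. vinner (X j) (X j))"
    unfolding Psi'_eq sinner_sums
    by (intro sum.cong refl) (simp add: diag if_distrib cong: if_cong)
  have z1: "(\<Prod>l<n. vinner (E j l) (U l)) = 0" if "j < n" for j
    by (rule prod_zero) (use that in \<open>auto simp: E_def XU intro!: bexI[of _ j]\<close>)
  have z2: "(\<Prod>l<n. vinner (U l) (E j l)) = 0" if "j < n" for j
    by (rule prod_zero) (use that in \<open>auto simp: E_def UX intro!: bexI[of _ j]\<close>)
  show "sinner (prod_index n) Psi' Psi0 = 0"
    unfolding Psi'_eq Psi0_eq sinner_sums by (simp add: z1)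
  show "sinner (prod_index n) Psi0 Psi' = 0"
    unfolding Psi'_eq Psi0_eq sinner_sums by (simp add: z2)
qed




context setting begin

lemma sinner_vec: "sinner UNIV (\<lambda>x. u $ x) (\<lambda>x. v $ x) = vinner u v"
  by (simp add: sinner_def vinner_def)

lemma qim_ii:
  assumes m: "m < CARD('d) - 1" and F: "(F has_real_derivative D) (at (\<theta> m))"
  shows "sld_qim UNIV (\<lambda>\<theta> a. vst F \<theta> $ a) \<theta> m m = 4 * (D^2 / real CARD('d))"
proof -
  define X where "X = (\<Sum>a\<in>UNIV. (\<i> * of_real (D * L m a) * C F \<theta> a) *s w a)"
  have pd: "pd_state (\<lambda>\<theta> a. vst F \<theta> $ a) \<theta> m = (\<lambda>x. X $ x)"
    unfolding pd_state_def X_def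
    by (rule ext, rule vector_derivative_at, rule vst_deriv[where \<theta>=\<theta> and m=m, OF m F])
  show ?thesis
    unfolding sld_qim_def pd sinner_vec X_def inner_facts[OF m] by simp
qed

lemma qim_i:
  assumes m: "m < CARD('d) - 1"
    and F: "\<And>j. j < n \<Longrightarrow> (f j has_real_derivative D j) (at (\<theta> m))"
  shows "sld_qim (prod_index n) (\<lambda>\<theta> g. \<Prod>j<n. vst (f j) \<theta> $ g j) \<theta> m m
       = 4 * (\<Sum>j<n. (D j)^2 / real CARD('d))"
proof -
  define X where "X j = (\<Sum>a\<in>UNIV. (\<i> * of_real (D j * L m a) * C (f j) \<theta> a) *s w a)" for j
  define U where "U l = vst (f l) \<theta>" for l
  have pd: "pd_state (\<lambda>\<theta> g. \<Prod>j<n. vst (f j) \<theta> $ g j) \<theta> m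
      = (\<lambda>g. \<Sum>j<n. X j $ g j * (\<Prod>l\<in>{..<n} - {j}. U l $ g l))"
  proof (rule ext)
    fix g
    have "((\<lambda>s. \<Prod>j<n. vst (f j) (\<theta>(m:=s)) $ g j) has_vector_derivative
        (\<Sum>j<n. X j $ g j * (\<Prod>l\<in>{..<n} - {j}. vst (f l) (\<theta>(m := \<theta> m)) $ g l))) (at (\<theta> m))"
      unfolding X_def
      by (rule prod_vec_deriv, rule vst_deriv[where \<theta>=\<theta> and m=m, OF m F]) simp
    then show "pd_state (\<lambda>\<theta> g. \<Prod>j<n. vst (f j) \<theta> $ g j) \<theta> m g
      = (\<Sum>j<n. X j $ g j * (\<Prod>l\<in>{..<n} - {j}. U l $ g l))"
      unfolding pd_state_def U_def by (simp add: vector_derivative_at)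
  qed
  have UU: "vinner (U l) (U l) = 1" for l unfolding U_def using inner_facts(1)[OF m] .
  have XU: "vinner (X l) (U l) = 0" for l unfolding U_def X_def using inner_facts(2)[OF m] .
  have UX: "vinner (U l) (X l) = 0" for l unfolding U_def X_def using inner_facts(3)[OF m] .
  have XX: "vinner (X l) (X l) = of_real ((D l)^2 / real CARD('d))" for l
    unfolding X_def using inner_facts(4)[OF m] .
  have Psi0: "(\<lambda>\<theta> g. \<Prod>j<n. vst (f j) \<theta> $ g j) \<theta> = (\<lambda>g. \<Prod>l<n. U l $ g l)"
    by (simp add: U_def)
  show ?thesis
    unfolding sld_qim_def pd Psi0 scheme_i_inner[OF UU XU UX] XX
    by (simp add: of_real_sum[symmetric])
qed

end



theorem proposition4p4:
  fixes t :: "nat \<Rightarrow> complex^'d^'d"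
    and w :: "'d \<Rightarrow> complex^'d"
    and f :: "nat \<Rightarrow> real \<Rightarrow> real"
    and n :: nat
    and \<Theta> :: "real set"
    and \<theta> :: "nat \<Rightarrow> real"
  assumes herm: "\<And>k. k < CARD('d) - 1 \<Longrightarrow> adjoint_mat (t k) = t k"
    and traceless: "\<And>k. k < CARD('d) - 1 \<Longrightarrow> mtrace (t k) = 0"
    and orth: "\<And>k l. k < CARD('d) - 1 \<Longrightarrow> l < CARD('d) - 1 \<Longrightarrow>
                 mtrace (t k ** t l) = (if k = l then 1 else 0)"
    and comm: "\<And>k l. k < CARD('d) - 1 \<Longrightarrow> l < CARD('d) - 1 \<Longrightarrow> t k ** t l = t l ** t k"
    and onb: "\<And>a b. vinner (w a) (w b) = (if a = b then 1 else 0)"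
    and eig: "\<And>k a. k < CARD('d) - 1 \<Longrightarrow> \<exists>c. t k *v w a = c *s w a"
    and range_open: "open \<Theta>"
    and diff: "\<And>j x. j < n \<Longrightarrow> x \<in> \<Theta> \<Longrightarrow> f j differentiable (at x)"
    and pos: "\<And>j x. j < n \<Longrightarrow> x \<in> \<Theta> \<Longrightarrow> deriv (f j) x > 0"
    and bound: "\<And>x. x \<in> \<Theta> \<Longrightarrow> 0 \<le> (\<Sum>j<n. f j x) \<and> (\<Sum>j<n. f j x) \<le> pi"
    and theta_in: "\<And>k. k < CARD('d) - 1 \<Longrightarrow> \<theta> k \<in> \<Theta>"
  shows "sld_qim_trace (CARD('d) - 1) (prod_index n) (scheme_i t f n w) \<theta>
           = 4 / real CARD('d) * (\<Sum>i<CARD('d) - 1. \<Sum>j<n. (deriv (f j) (\<theta> i))\<^sup>2)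
       \<and> sld_qim_trace (CARD('d) - 1) UNIV (scheme_ii t f n w) \<theta>
           = 4 / real CARD('d) * (\<Sum>i<CARD('d) - 1. (\<Sum>j<n. deriv (f j) (\<theta> i))\<^sup>2)"
proof -
  interpret setting t w
    by unfold_locales (use herm traceless orth onb eig in auto)
  have D: "(f j has_real_derivative deriv (f j) (\<theta> m)) (at (\<theta> m))" if "j < n" "m < CARD('d) - 1" for j m
    using diff[OF that(1) theta_in[OF that(2)]] DERIV_deriv_iff_real_differentiable by blast
  have si: "scheme_i t f n w = (\<lambda>\<theta> g. \<Prod>j<n. vst (f j) \<theta> $ g j)"
    by (simp add: scheme_i_def chan_psi fun_eq_iff)
  have sii: "scheme_ii t f n w = (\<lambda>\<theta> a. vst (\<lambda>x. \<Sum>j<n. f j x) \<theta> $ a)"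
    by (simp add: scheme_ii_def seq_vst fun_eq_iff)
  have DS: "((\<lambda>x. \<Sum>j<n. f j x) has_real_derivative (\<Sum>j<n. deriv (f j) (\<theta> m))) (at (\<theta> m))"
    if "m < CARD('d) - 1" for m
    by (rule DERIV_sum) (use D that in auto)
  have "sld_qim_trace (CARD('d) - 1) (prod_index n) (scheme_i t f n w) \<theta>
      = (\<Sum>m<CARD('d) - 1. 4 * (\<Sum>j<n. (deriv (f j) (\<theta> m))^2 / real CARD('d)))"
    unfolding sld_qim_trace_def si
    by (intro sum.cong refl qim_i) (use D in auto)
  also have "\<dots> = 4 / real CARD('d) * (\<Sum>i<CARD('d) - 1. \<Sum>j<n. (deriv (f j) (\<theta> i))\<^sup>2)"
    by (simp add: sum_distrib_left sum_divide_distrib[symmetric])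
  finally have 1: "sld_qim_trace (CARD('d) - 1) (prod_index n) (scheme_i t f n w) \<theta>
      = 4 / real CARD('d) * (\<Sum>i<CARD('d) - 1. \<Sum>j<n. (deriv (f j) (\<theta> i))\<^sup>2)" .
  have "sld_qim_trace (CARD('d) - 1) UNIV (scheme_ii t f n w) \<theta>
      = (\<Sum>m<CARD('d) - 1. 4 * ((\<Sum>j<n. deriv (f j) (\<theta> m))^2 / real CARD('d)))"
    unfolding sld_qim_trace_def sii
    by (intro sum.cong refl qim_ii DS) auto
  also have "\<dots> = 4 / real CARD('d) * (\<Sum>i<CARD('d) - 1. (\<Sum>j<n. deriv (f j) (\<theta> i))\<^sup>2)"
    by (simp add: sum_distrib_left sum_divide_distrib[symmetric])
  finally show ?thesis using 1 by simp
qed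


end
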